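(* Let $\Gamma\subset\mathbb{C}^*$ act on $\mathbb{P}^1$ by $\gamma\cdot z=\gamma z$ on $\mathbb{C}^*$, fixing $0,\infty$. Consider pairs $(R,\sigma)$ with $R\in\mathbb{C}(z)$ and $\sigma:\Gamma\to\Gamma$ a homomorphism satisfying $R(\gamma z)=\sigma(\gamma)R(z)$ for all $z\in\mathbb{C}^*$, $\gamma\in\Gamma$ (strict meromorphic endomorphisms of $[\mathbb{P}^1/\Gamma]$). Then: (a) If $\Gamma=\mu_N$, these are exactly the pairs with $R(z)=z^m\frac{P(z^N)}{Q(z^N)}$, $\sigma(\zeta)=\zeta^m$, where $m\in\mathbb{Z}$ and $P,Q\in\mathbb{C}[t]$ are coprime. (b) If $\Gamma=q^{\mathbb{Z}}$ with $|q|\ne1$, every such pair has $R(z)=cz^n$ with $c\in\mathbb{C}^*$, $n\in\mathbb{Z}$. (c) If $\Gamma$ has accumulation in $\mathbb{C}^*$ (contains $q$ with $|q|\ne1$, or a sequence $\gamma_n\to1$ with $\gamma_n\ne1$), every such pair has $R(z)=cz^n$ with $c\in\mathbb{C}^*$, $n\in\mathbb{Z}$. In particular, outside the case $\Gamma$ finite, compactified reparametrizations are monomial.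
   Context: $\mu_N$ is the group of $N$-th roots of unity. *)

theory Defs
  imports "HOL-Analysis.Analysis" "HOL-Computational_Algebra.Polynomial_Factorial"
begin

definition mult_subgroup :: "complex set \<Rightarrow> bool" where
  "mult_subgroup G \<longleftrightarrow> 1 \<in> G \<and> 0 \<notin> G \<and> (\<forall>x\<in>G. \<forall>y\<in>G. x * y \<in> G) \<and> (\<forall>x\<in>G. inverse x \<in> G)"

text \<open>A group endomorphism of G (only its values on G matter).\<close>
definition grp_endo :: "complex set \<Rightarrow> (complex \<Rightarrow> complex) \<Rightarrow> bool" where
  "grp_endo G \<sigma> \<longleftrightarrow> (\<forall>x\<in>G. \<sigma> x \<in> G) \<and> (\<forall>x\<in>G. \<forall>y\<in>G. \<sigma> (x * y) = \<sigma> x * \<sigma> y)"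

definition mu :: "nat \<Rightarrow> complex set" where
  "mu N = {z. z ^ N = 1}"

text \<open>The rational function R = A/B (with B \<noteq> 0), together with \<sigma>, is a strict
  meromorphic endomorphism of [P^1/G]: R(\<gamma> z) = \<sigma>(\<gamma>) R(z) as rational functions,
  expressed by cross-multiplication on \<complex>^*.\<close>
definition strict_endo :: "complex set \<Rightarrow> complex poly \<Rightarrow> complex poly \<Rightarrow> (complex \<Rightarrow> complex) \<Rightarrow> bool" where
  "strict_endo G A B \<sigma> \<longleftrightarrow> B \<noteq> 0 \<and> grp_endo G \<sigma> \<and>
     (\<forall>\<gamma>\<in>G. \<forall>z. z \<noteq> 0 \<longrightarrow> poly A (\<gamma> * z) * poly B z = \<sigma> \<gamma> * poly A z * poly B (\<gamma> * z))"

definition monomial_rat :: "complex poly \<Rightarrow> complex poly \<Rightarrow> bool" where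
  "monomial_rat A B \<longleftrightarrow> (\<exists>c::complex. \<exists>n::int. c \<noteq> 0 \<and> (\<forall>z. z \<noteq> 0 \<longrightarrow> poly A z = c * z powi n * poly B z))"

end

theory Submission
  imports Defs "HOL-Computational_Algebra.Computational_Algebra" "HOL-Computational_Algebra.Field_as_Ring"
begin


lemma ev_fin: "finite (S::complex set) \<Longrightarrow> eventually (\<lambda>w. w \<notin> S) (at z)"
proof (induction S rule: finite_induct)
  case empty then show ?case by simp
next
  case (insert x F)
  have "eventually (\<lambda>w. w \<noteq> x) (at z)"
    by (cases "x = z") (auto simp: eventually_neq_at_within eventually_at_filter)
  with insert show ?case by (auto elim: eventually_elim2)
qed

lemma ext_finite:
  fixes f g :: "complex \<Rightarrow> complex"
  assumes "open U" "finite S" "continuous_on U f" "continuous_on U g"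
    "\<And>z. z \<in> U \<Longrightarrow> z \<notin> S \<Longrightarrow> f z = g z" "z \<in> U"
  shows "f z = g z"
proof -
  have f: "(f \<longlongrightarrow> f z) (at z)" and g: "(g \<longlongrightarrow> g z) (at z)"
    using assms continuous_on_eq_continuous_at isContD by blast+
  have "eventually (\<lambda>w. w \<in> U \<and> w \<notin> S) (at z)"
    using eventually_conj[OF eventually_at_in_open'[OF assms(1,6)] ev_fin[OF assms(2), of z]] by simp
  then have "eventually (\<lambda>w. f w = g w) (at z)"
    by (auto elim: eventually_mono intro: assms(5))
  then have "(g \<longlongrightarrow> f z) (at z)" using f Lim_transform_eventually by blast
  then show ?thesis using g tendsto_unique[OF at_neq_bot] by blast
qed

lemma coprime_no_common_root:
  fixes a b :: "complex poly"
  assumes "coprime a b" "poly a z = 0"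
  shows "poly b z \<noteq> 0"
proof
  assume "poly b z = 0"
  then have "[:-z,1:] dvd a" "[:-z,1:] dvd b" using assms poly_eq_0_iff_dvd by blast+
  then have "is_unit [:-z,1:]" using assms(1) coprime_common_divisor by blast
  then show False by (simp add: is_unit_poly_iff)
qed

lemma no_nonzero_roots:
  fixes p :: "complex poly"
  assumes "p \<noteq> 0" "\<And>z. z \<noteq> 0 \<Longrightarrow> poly p z \<noteq> 0"
  shows "\<exists>c k. c \<noteq> 0 \<and> (\<forall>z. poly p z = c * z ^ k)"
proof -
  obtain q where q: "p = [:- 0, 1:] ^ order 0 p * q" "\<not> [:- 0, 1:] dvd q"
    using order_decomp[OF assms(1)] by blast
  have nr: "poly q z \<noteq> 0" for z
  proof
    assume z: "poly q z = 0"
    show False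
    proof (cases "z = 0")
      case True then show False using z q(2) poly_eq_0_iff_dvd by blast
    next
      case False then show False using assms(2)[OF False] z by (subst (asm) q(1)) simp
    qed
  qed
  have "constant (poly q)" using fundamental_theorem_of_algebra nr by blast
  then have "degree q = 0" by (simp add: constant_degree)
  then obtain c where c: "q = [:c:]" by (metis degree_eq_zeroE)
  have "c \<noteq> 0" using nr[of 0] c by simp
  moreover have "\<forall>z. poly p z = c * z ^ order 0 p"
    by (subst q(1)) (simp add: c poly_monom)
  ultimately show ?thesis by blast
qed

lemma core:
  assumes G0: "0 \<notin> G" and Ginf: "infinite G" and se: "strict_endo G A B \<sigma>" and A0: "A \<noteq> 0"
  shows "monomial_rat A B"
proof -
  from se have B0: "B \<noteq> 0" and ge: "grp_endo G \<sigma>"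
    and cr: "\<And>\<gamma> z. \<gamma> \<in> G \<Longrightarrow> z \<noteq> 0 \<Longrightarrow> poly A (\<gamma> * z) * poly B z = \<sigma> \<gamma> * poly A z * poly B (\<gamma> * z)"
    unfolding strict_endo_def by blast+
  define g where "g = gcd A B"
  define a where "a = A div g"
  define b where "b = B div g"
  have g0: "g \<noteq> 0" using B0 g_def by simp
  have Aeq: "A = g * a" unfolding a_def g_def by simp
  have Beq: "B = g * b" unfolding b_def g_def by simp
  have cop: "coprime a b" unfolding a_def b_def g_def using B0 by (intro div_gcd_coprime) simp
  have a0: "a \<noteq> 0" using A0 Aeq by auto
  have b0: "b \<noteq> 0" using B0 Beq by auto
  have key: "poly a (\<gamma> * z) * poly b z = \<sigma> \<gamma> * poly a z * poly b (\<gamma> * z)"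
    if \<gamma>: "\<gamma> \<in> G" and z: "z \<noteq> 0" for \<gamma> z
  proof -
    have \<gamma>0: "\<gamma> \<noteq> 0" using \<gamma> G0 by auto
    let ?S = "{z. poly g z = 0} \<union> {z. poly (pcompose g [:0,\<gamma>:]) z = 0}"
    have pc0: "pcompose g [:0,\<gamma>:] \<noteq> 0" using g0 \<gamma>0 pcompose_eq_0 by fastforce
    have fin: "finite ?S" using g0 pc0 poly_roots_finite by blast
    have eqw: "poly a (\<gamma> * w) * poly b w = \<sigma> \<gamma> * poly a w * poly b (\<gamma> * w)"
      if w: "w \<in> - {0}" "w \<notin> ?S" for w
    proof -
      have "poly g w \<noteq> 0" "poly g (\<gamma> * w) \<noteq> 0" using w by (auto simp: poly_pcompose mult.commute)
      moreover have "poly A (\<gamma> * w) * poly B w = \<sigma> \<gamma> * poly A w * poly B (\<gamma> * w)"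
        using cr[OF \<gamma>] w by auto
      ultimately show ?thesis
        unfolding Aeq Beq by (auto simp: algebra_simps)
    qed
    show ?thesis
      by (rule ext_finite[of "-{0}" ?S "\<lambda>w. poly a (\<gamma> * w) * poly b w" "\<lambda>w. \<sigma> \<gamma> * poly a w * poly b (\<gamma> * w)", OF _ fin _ _ eqw])
        (use z in \<open>auto intro!: continuous_intros\<close>)
  qed
  have \<sigma>0: "\<sigma> \<gamma> \<noteq> 0" if "\<gamma> \<in> G" for \<gamma>
    using ge that G0 unfolding grp_endo_def by metis
  have orbit_fin: False if z0: "z0 \<noteq> 0" and sub: "(\<lambda>\<gamma>. \<gamma> * z0) ` G \<subseteq> {z. poly p z = 0}" and p0: "p \<noteq> 0"
    for z0 and p :: "complex poly"
  proof -
    have "finite ((\<lambda>\<gamma>. \<gamma> * z0) ` G)" using sub poly_roots_finite[OF p0] finite_subset by blast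
    moreover have "inj_on (\<lambda>\<gamma>. \<gamma> * z0) G" using z0 by (auto simp: inj_on_def)
    ultimately show False using Ginf finite_imageD by blast
  qed
  have ra: "poly a z \<noteq> 0" if "z \<noteq> 0" for z
  proof
    assume az: "poly a z = 0"
    have "poly b z \<noteq> 0" using coprime_no_common_root[OF cop az] .
    then have "(\<lambda>\<gamma>. \<gamma> * z) ` G \<subseteq> {z. poly a z = 0}"
      using key[OF _ that] az by auto
    then show False using orbit_fin[OF that _ a0] by blast
  qed
  have rb: "poly b z \<noteq> 0" if "z \<noteq> 0" for z
  proof
    assume bz: "poly b z = 0"
    have "poly a z \<noteq> 0" using coprime_no_common_root[OF _ bz] cop by (simp add: coprime_commute)
    then have "(\<lambda>\<gamma>. \<gamma> * z) ` G \<subseteq> {z. poly b z = 0}"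
      using key[OF _ that] bz \<sigma>0 by auto
    then show False using orbit_fin[OF that _ b0] by blast
  qed
  obtain c1 k where c1: "c1 \<noteq> 0" "\<forall>z. poly a z = c1 * z ^ k" using no_nonzero_roots[OF a0 ra] by blast
  obtain c2 l where c2: "c2 \<noteq> 0" "\<forall>z. poly b z = c2 * z ^ l" using no_nonzero_roots[OF b0 rb] by blast
  show ?thesis unfolding monomial_rat_def
  proof (intro exI conjI allI impI)
    show "c1 / c2 \<noteq> 0" using c1 c2 by simp
    fix z :: complex assume z: "z \<noteq> 0"
    have "z powi (int k - int l) * z ^ l = z ^ k"
      using z by (simp add: power_int_diff power_int_of_nat)
    then show "poly A z = c1 / c2 * z powi (int k - int l) * poly B z"
      unfolding Aeq Beq using c1 c2 by (simp add: field_simps)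
  qed
qed


lemma inj_powers:
  fixes q :: complex
  assumes "q \<noteq> 0" "norm q \<noteq> 1"
  shows "inj (\<lambda>n::nat. q ^ n)"
proof (rule injI)
  fix n m :: nat assume eq: "q ^ n = q ^ m"
  show "n = m"
  proof (rule ccontr)
    assume "n \<noteq> m"
    then have "n < m \<or> m < n" by arith
    then have "\<exists>a b. a < b \<and> q ^ a = q ^ b"
    proof
      assume "n < m" then show ?thesis using eq by blast
    next
      assume "m < n" then show ?thesis using eq[symmetric] by blast
    qed
    then obtain a b where ab: "a < b" "q ^ a = q ^ b" by blast
    have "q ^ a * q ^ (b - a) = q ^ b" using ab(1) by (simp flip: power_add)
    then have "q ^ a * q ^ (b - a) = q ^ a * 1" using ab(2) by simp
    then have "q ^ (b - a) = 1" using assms(1) by simp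
    then have "norm q ^ (b - a) = 1" by (metis norm_one norm_power)
    moreover have "b - a \<noteq> 0" using ab(1) by simp
    ultimately have "norm q = 1" using power_eq_1_iff by fastforce
    then show False using assms(2) by simp
  qed
qed
lemma infinite_powers:
  fixes q :: complex
  assumes "q \<noteq> 0" "norm q \<noteq> 1" "\<And>n. q ^ n \<in> G"
  shows "infinite G"
proof
  assume "finite G"
  moreover have "range (\<lambda>n::nat. q ^ n) \<subseteq> G" using assms(3) by auto
  ultimately have "finite (range (\<lambda>n::nat. q ^ n))" by (rule finite_subset[rotated])
  then have "finite (UNIV :: nat set)" using inj_powers[OF assms(1,2)] by (rule finite_imageD)
  then show False by simp
qed

lemma infinite_seq:
  fixes G :: "complex set"
  assumes "\<And>n. g n \<in> G \<and> g n \<noteq> 1" "g \<longlonglongrightarrow> 1"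
  shows "infinite G"
proof
  assume fin: "finite G"
  define S where "S = G - {1}"
  have finS: "finite S" using fin S_def by simp
  have gS: "g n \<in> S" for n using assms(1) S_def by auto
  then have ne: "S \<noteq> {}" by blast
  define e where "e = Min ((\<lambda>x. dist x 1) ` S)"
  have "e \<in> (\<lambda>x. dist x 1) ` S" unfolding e_def using finS ne by (intro Min_in) auto
  then have e0: "e > 0" unfolding S_def by auto
  have le: "e \<le> dist (g n) 1" for n unfolding e_def using finS gS[of n] by (intro Min_le) simp_all
  from tendstoD[OF assms(2) e0] obtain N where "\<forall>n\<ge>N. dist (g n) 1 < e"
    unfolding eventually_sequentially by blast
  then have "dist (g N) 1 < e" by simp
  then show False using le[of N] by simp
qed

definition zN :: "nat \<Rightarrow> complex" where
  "zN N = exp (2 * of_real pi * \<i> / of_nat N)"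

lemma zN_pow: "zN N ^ k = exp (2 * of_real pi * \<i> * of_nat k / of_nat N)"
proof -
  have "zN N ^ k = exp (of_nat k * (2 * of_real pi * \<i> / of_nat N))"
    unfolding zN_def by (rule exp_of_nat_mult[symmetric])
  also have "of_nat k * (2 * of_real pi * \<i> / of_nat N) = 2 * of_real pi * \<i> * of_nat k / (of_nat N :: complex)"
    by simp
  finally show ?thesis .
qed

lemma zN_eq: "N \<ge> 1 \<Longrightarrow> zN N ^ k = zN N ^ l \<longleftrightarrow> k mod N = l mod N"
  unfolding zN_pow by (rule complex_root_unity_eq)

lemma zN_N: "N \<ge> 1 \<Longrightarrow> zN N ^ N = 1"
  using zN_eq[of N N 0] by simp

lemma zN_ne0: "zN N \<noteq> 0"
  unfolding zN_def by simp

lemma mu_zN: "N \<ge> 1 \<Longrightarrow> z ^ N = 1 \<Longrightarrow> \<exists>k<N. z = zN N ^ k"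
  using complex_roots_unity[of N] unfolding zN_pow by blast

lemma zN_mu: "N \<ge> 1 \<Longrightarrow> zN N ^ k \<in> mu N"
  unfolding mu_def by (simp add: power_mult[symmetric] mult.commute[of k] power_mult zN_N)

lemma sigma_pow:
  assumes N: "N > 0" and ge: "grp_endo (mu N) \<sigma>"
  shows "\<exists>j<N. \<forall>\<zeta>\<in>mu N. \<sigma> \<zeta> = \<zeta> ^ j"
proof -
  have N1: "N \<ge> 1" using N by simp
  have cl: "\<And>x. x \<in> mu N \<Longrightarrow> \<sigma> x \<in> mu N" and hom: "\<And>x y. x \<in> mu N \<Longrightarrow> y \<in> mu N \<Longrightarrow> \<sigma> (x * y) = \<sigma> x * \<sigma> y"
    using ge unfolding grp_endo_def by blast+
  obtain j where j: "j < N" "\<sigma> (zN N) = zN N ^ j"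
    using mu_zN[OF N1, of "\<sigma> (zN N)"] cl[OF zN_mu[OF N1, of 1]] unfolding mu_def by auto
  have one: "1 \<in> mu N" unfolding mu_def by simp
  have "\<sigma> 1 = \<sigma> 1 * \<sigma> 1" using hom[OF one one] by simp
  moreover have "\<sigma> 1 \<noteq> 0" using cl[OF one] N unfolding mu_def by (auto simp: power_0_left)
  ultimately have s1: "\<sigma> 1 = 1" by simp
  have pk: "\<sigma> (zN N ^ k) = zN N ^ (j * k)" for k
  proof (induction k)
    case 0 then show ?case using s1 by simp
  next
    case (Suc k)
    have "\<sigma> (zN N ^ Suc k) = \<sigma> (zN N * zN N ^ k)" by simp
    also have "\<dots> = \<sigma> (zN N) * \<sigma> (zN N ^ k)"
      using hom zN_mu[OF N1, of 1] zN_mu[OF N1, of k] by simp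
    also have "\<dots> = zN N ^ (j * Suc k)" using Suc j by (simp add: power_add)
    finally show ?case .
  qed
  show ?thesis
  proof (intro exI conjI ballI)
    show "j < N" by fact
    fix \<zeta> assume "\<zeta> \<in> mu N"
    then obtain k where "\<zeta> = zN N ^ k" using mu_zN[OF N1] unfolding mu_def by auto
    then show "\<sigma> \<zeta> = \<zeta> ^ j" using pk by (simp add: power_mult[symmetric] mult.commute)
  qed
qed

lemma coeff_res:
  fixes p :: "complex poly"
  assumes N1: "N \<ge> 1" and inv: "\<And>z. poly p (zN N * z) = zN N ^ r * poly p z"
    and ck: "coeff p k \<noteq> 0"
  shows "k mod N = r mod N"
proof -
  have "poly (pcompose p [:0, zN N:]) = poly (smult (zN N ^ r) p)"
  proof
    fix z show "poly (pcompose p [:0, zN N:]) z = poly (smult (zN N ^ r) p) z"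
      using inv[of z] by (simp add: poly_pcompose mult.commute)
  qed
  then have "pcompose p [:0, zN N:] = smult (zN N ^ r) p" by (simp add: poly_eq_poly_eq_iff)
  then have "coeff (pcompose p [:0, zN N:]) k = coeff (smult (zN N ^ r) p) k" by simp
  then have "zN N ^ k * coeff p k = zN N ^ r * coeff p k" by (simp add: coeff_pcompose_linear)
  then have "zN N ^ k = zN N ^ r" using ck by simp
  then show ?thesis using zN_eq[OF N1] by simp
qed

lemma poly_sum_upto:
  fixes p :: "complex poly"
  assumes "degree p \<le> n"
  shows "poly p z = (\<Sum>i\<le>n. coeff p i * z ^ i)"
  unfolding poly_altdef
  by (rule sum.mono_neutral_left) (use assms in \<open>auto simp: coeff_eq_0\<close>)

lemma decomp:
  fixes p :: "complex poly"
  assumes N: "N > 0" and r: "r < N" and cf: "\<And>k. coeff p k \<noteq> 0 \<Longrightarrow> k mod N = r"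
  shows "\<exists>p'. \<forall>z. poly p z = z ^ r * poly p' (z ^ N)"
proof -
  define D where "D = degree p"
  define p' where "p' = (\<Sum>j\<le>D. monom (coeff p (r + j * N)) j)"
  have "poly p z = z ^ r * poly p' (z ^ N)" for z
  proof -
    let ?f = "\<lambda>j. r + j * N"
    have inj: "inj_on ?f {..D}" using N by (auto simp: inj_on_def)
    have pw: "z ^ (r + j * N) = z ^ r * (z ^ N) ^ j" for j
      by (simp add: power_add power_mult[symmetric] mult.commute)
    have summ: "z ^ r * (coeff p (r + j * N) * (z ^ N) ^ j) = coeff p (r + j * N) * z ^ (r + j * N)" for j
      unfolding pw by (simp only: mult_ac)
    have "z ^ r * poly p' (z ^ N) = (\<Sum>j\<le>D. coeff p (r + j * N) * z ^ (r + j * N))"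
      unfolding p'_def poly_sum poly_monom sum_distrib_left
      by (intro sum.cong refl summ)
    also have "\<dots> = (\<Sum>k\<in>?f ` {..D}. coeff p k * z ^ k)"
      using sum.reindex[OF inj, of "\<lambda>k. coeff p k * z ^ k"] by simp
    also have "\<dots> = (\<Sum>k\<le>r + D * N. coeff p k * z ^ k)"
    proof (rule sum.mono_neutral_left)
      show "?f ` {..D} \<subseteq> {..r + D * N}" by auto
      show "\<forall>i\<in>{..r + D * N} - ?f ` {..D}. coeff p i * z ^ i = 0"
      proof
        fix i assume i: "i \<in> {..r + D * N} - ?f ` {..D}"
        show "coeff p i * z ^ i = 0"
        proof (rule ccontr)
          assume "coeff p i * z ^ i \<noteq> 0"
          then have ci: "coeff p i \<noteq> 0" by auto
          then have "i mod N = r" by (rule cf)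
          then have ieq: "i = r + (i div N) * N" by (metis div_mult_mod_eq add.commute)
          have "i \<le> D" unfolding D_def using ci le_degree by blast
          then have "i div N \<le> D" using div_le_dividend order_trans by blast
          then have "i \<in> ?f ` {..D}" using ieq by blast
          then show False using i by blast
        qed
      qed
    qed simp
    also have "\<dots> = poly p z"
    proof (rule poly_sum_upto[symmetric])
      have "D * 1 \<le> D * N" using N by (intro mult_le_mono2) simp
      then have "D \<le> r + D * N" by linarith
      then show "degree p \<le> r + D * N" unfolding D_def .
    qed
    finally show ?thesis by simp
  qed
  then show ?thesis by blast
qed

lemma gcd_reduce:
  fixes A B P0 Q0 :: "complex poly"
  assumes N: "N > 0" and Q0: "Q0 \<noteq> 0"
    and id: "\<forall>z. z \<noteq> 0 \<longrightarrow> poly A z * poly Q0 (z ^ N) = z powi m * poly P0 (z ^ N) * poly B z"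
  shows "\<exists>P Q. coprime P Q \<and> Q \<noteq> 0 \<and>
     (\<forall>z. z \<noteq> 0 \<longrightarrow> poly A z * poly Q (z ^ N) = z powi m * poly P (z ^ N) * poly B z)"
proof -
  define d where "d = gcd P0 Q0"
  define P where "P = P0 div d"
  define Q where "Q = Q0 div d"
  have d0: "d \<noteq> 0" using Q0 d_def by simp
  have P0e: "P0 = d * P" unfolding P_def d_def by simp
  have Q0e: "Q0 = d * Q" unfolding Q_def d_def by simp
  have cop: "coprime P Q" unfolding P_def Q_def d_def using Q0 by (intro div_gcd_coprime) simp
  have Qn0: "Q \<noteq> 0" using Q0 Q0e by auto
  define dd where "dd = pcompose d (monom 1 N)"
  have pdd: "poly dd z = poly d (z ^ N)" for z unfolding dd_def by (simp add: poly_pcompose poly_monom)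
  have dd0: "dd \<noteq> 0" unfolding dd_def using d0 N pcompose_eq_0[of d "monom 1 N"] by (auto simp: degree_monom_eq)
  have fin: "finite {z. poly dd z = 0}" using dd0 poly_roots_finite by blast
  have eqw: "poly A w * poly Q (w ^ N) = w powi m * poly P (w ^ N) * poly B w"
    if w: "w \<in> -{0}" "w \<notin> {z. poly dd z = 0}" for w
  proof -
    have dn: "poly d (w ^ N) \<noteq> 0" using pdd w by auto
    have "poly A w * poly Q0 (w ^ N) = w powi m * poly P0 (w ^ N) * poly B w" using id w by auto
    then have "poly d (w ^ N) * (poly A w * poly Q (w ^ N)) = poly d (w ^ N) * (w powi m * poly P (w ^ N) * poly B w)"
      unfolding P0e Q0e by (simp add: algebra_simps)
    then show ?thesis using dn by simp
  qed
  have "poly A z * poly Q (z ^ N) = z powi m * poly P (z ^ N) * poly B z" if z: "z \<noteq> 0" for z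
    by (rule ext_finite[of "-{0}" "{z. poly dd z = 0}" "\<lambda>z. poly A z * poly Q (z ^ N)"
          "\<lambda>z. z powi m * poly P (z ^ N) * poly B z", OF _ fin _ _ eqw])
      (use z in \<open>auto intro!: continuous_intros\<close>)
  then show ?thesis using cop Qn0 by blast
qed

lemma part_a_rev:
  fixes A B P Q :: "complex poly"
  assumes N: "N > 0" and B0: "B \<noteq> 0" and Q0: "Q \<noteq> 0"
    and id: "\<forall>z. z \<noteq> 0 \<longrightarrow> poly A z * poly Q (z ^ N) = z powi m * poly P (z ^ N) * poly B z"
    and sg: "\<forall>\<zeta>\<in>mu N. \<sigma> \<zeta> = \<zeta> powi m"
  shows "strict_endo (mu N) A B \<sigma>"
proof -
  have nz: "x \<noteq> 0" if "x \<in> mu N" for x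
    using that N unfolding mu_def by (auto simp: power_0_left)
  have pw: "(x powi m) ^ N = (x ^ N) powi m" for x :: complex
  proof -
    have "(x powi m) ^ N = x powi (m * int N)" by (rule power_int_power')
    also have "\<dots> = x powi (int N * m)" by (simp only: mult.commute)
    also have "\<dots> = (x powi int N) powi m" by (rule power_int_mult)
    also have "\<dots> = (x ^ N) powi m" by (simp only: power_int_of_nat)
    finally show ?thesis .
  qed
  have ge: "grp_endo (mu N) \<sigma>"
    unfolding grp_endo_def
  proof (intro conjI ballI)
    fix x assume x: "x \<in> mu N"
    show "\<sigma> x \<in> mu N" using sg x pw[of x] unfolding mu_def by simp
    fix y assume y: "y \<in> mu N"
    have "x * y \<in> mu N" using x y unfolding mu_def by (simp add: power_mult_distrib)
    then show "\<sigma> (x * y) = \<sigma> x * \<sigma> y" using sg x y by (simp add: power_int_mult_distrib)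
  qed
  define qq where "qq = pcompose Q (monom 1 N)"
  have pqq: "poly qq z = poly Q (z ^ N)" for z unfolding qq_def by (simp add: poly_pcompose poly_monom)
  have qq0: "qq \<noteq> 0" unfolding qq_def using Q0 N pcompose_eq_0[of Q "monom 1 N"] by (auto simp: degree_monom_eq)
  have fin: "finite {z. poly qq z = 0}" using qq0 poly_roots_finite by blast
  have cr: "poly A (\<gamma> * z) * poly B z = \<sigma> \<gamma> * poly A z * poly B (\<gamma> * z)"
    if \<gamma>: "\<gamma> \<in> mu N" and z: "z \<noteq> 0" for \<gamma> z
  proof -
    have \<gamma>0: "\<gamma> \<noteq> 0" using nz \<gamma> by blast
    have \<gamma>N: "\<gamma> ^ N = 1" using \<gamma> unfolding mu_def by simp
    have eqw: "poly A (\<gamma> * w) * poly B w = \<gamma> powi m * poly A w * poly B (\<gamma> * w)"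
      if w: "w \<in> -{0}" "w \<notin> {z. poly qq z = 0}" for w
    proof -
      have w0: "w \<noteq> 0" using w by simp
      have qn: "poly Q (w ^ N) \<noteq> 0" using pqq w by auto
      have gw: "(\<gamma> * w) ^ N = w ^ N" using \<gamma>N by (simp add: power_mult_distrib)
      have h1: "poly A (\<gamma> * w) * poly Q (w ^ N) = (\<gamma> * w) powi m * poly P (w ^ N) * poly B (\<gamma> * w)"
        using id[rule_format, of "\<gamma> * w"] \<gamma>0 w0 gw by simp
      have h2: "poly A w * poly Q (w ^ N) = w powi m * poly P (w ^ N) * poly B w"
        using id w0 by blast
      have "poly Q (w ^ N) * (poly A (\<gamma> * w) * poly B w)
          = (\<gamma> * w) powi m * poly P (w ^ N) * poly B (\<gamma> * w) * poly B w"
        using h1 by (simp add: algebra_simps)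
      also have "\<dots> = \<gamma> powi m * poly B (\<gamma> * w) * (w powi m * poly P (w ^ N) * poly B w)"
        by (simp add: power_int_mult_distrib algebra_simps)
      also have "\<dots> = poly Q (w ^ N) * (\<gamma> powi m * poly A w * poly B (\<gamma> * w))"
        using h2[symmetric] by (simp add: algebra_simps)
      finally show ?thesis using qn by simp
    qed
    have "poly A (\<gamma> * z) * poly B z = \<gamma> powi m * poly A z * poly B (\<gamma> * z)"
      by (rule ext_finite[of "-{0}" "{z. poly qq z = 0}" "\<lambda>w. poly A (\<gamma> * w) * poly B w"
          "\<lambda>w. \<gamma> powi m * poly A w * poly B (\<gamma> * w)", OF _ fin _ _ eqw])
        (use z in \<open>auto intro!: continuous_intros\<close>)
    then show ?thesis using sg \<gamma> by simp
  qed
  show ?thesis unfolding strict_endo_def using B0 ge cr by blast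
qed

lemma part_a_fwd:
  fixes A B :: "complex poly"
  assumes N: "N > 0" and se: "strict_endo (mu N) A B \<sigma>"
  shows "\<exists>m::int. \<exists>P Q :: complex poly. coprime P Q \<and> Q \<noteq> 0 \<and>
            (\<forall>z. z \<noteq> 0 \<longrightarrow> poly A z * poly Q (z ^ N) = z powi m * poly P (z ^ N) * poly B z) \<and>
            (\<forall>\<zeta>\<in>mu N. \<sigma> \<zeta> = \<zeta> powi m)"
proof -
  have N1: "N \<ge> 1" using N by simp
  from se have B0: "B \<noteq> 0" and ge: "grp_endo (mu N) \<sigma>"
    and cr: "\<And>\<gamma> z. \<gamma> \<in> mu N \<Longrightarrow> z \<noteq> 0 \<Longrightarrow> poly A (\<gamma> * z) * poly B z = \<sigma> \<gamma> * poly A z * poly B (\<gamma> * z)"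
    unfolding strict_endo_def by blast+
  obtain j where j: "j < N" "\<forall>\<zeta>\<in>mu N. \<sigma> \<zeta> = \<zeta> ^ j" using sigma_pow[OF N ge] by blast
  define w0 where "w0 = zN N"
  have w0mu: "w0 \<in> mu N" unfolding w0_def using zN_mu[OF N1, of 1] by simp
  have w0N: "w0 ^ N = 1" unfolding w0_def using zN_N[OF N1] .
  have w00: "w0 \<noteq> 0" unfolding w0_def by (rule zN_ne0)
  obtain n where Nn: "N = Suc n" using N by (cases N) auto
  define C where "C = (\<Prod>i<n. pcompose B [:0, w0 ^ Suc i:])"
  define Bt where "Bt = B * C"
  define At where "At = A * C"
  have pC: "poly C z = (\<Prod>i<n. poly B (w0 ^ Suc i * z))" for z
    unfolding C_def by (simp add: poly_prod poly_pcompose mult.commute)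
  have pBt: "poly Bt z = (\<Prod>i<N. poly B (w0 ^ i * z))" for z
  proof -
    have "poly Bt z = poly B z * poly C z" unfolding Bt_def by simp
    also have "\<dots> = (\<Prod>i<Suc n. poly B (w0 ^ i * z))" unfolding pC prod.lessThan_Suc_shift by simp
    finally show ?thesis unfolding Nn .
  qed
  have invB: "poly Bt (w0 * z) = w0 ^ 0 * poly Bt z" for z
  proof -
    define f where "f i = poly B (w0 ^ i * z)" for i
    have "poly Bt (w0 * z) = (\<Prod>i<Suc n. f (Suc i))"
      unfolding pBt f_def Nn by (simp add: mult_ac)
    also have "\<dots> = (\<Prod>i<n. f (Suc i)) * f (Suc n)" by (rule prod.lessThan_Suc)
    also have "f (Suc n) = f 0" unfolding f_def using w0N Nn by simp
    also have "(\<Prod>i<n. f (Suc i)) * f 0 = (\<Prod>i<Suc n. f i)"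
      unfolding prod.lessThan_Suc_shift by (simp only: mult.commute)
    also have "\<dots> = poly Bt z" unfolding pBt f_def Nn ..
    finally show ?thesis by simp
  qed
  have C0: "C \<noteq> 0"
  proof -
    have "pcompose B [:0, w0 ^ Suc i:] \<noteq> 0" for i
      using B0 w00 pcompose_eq_0[of B "[:0, w0 ^ Suc i:]"] by auto
    then show ?thesis unfolding C_def by (simp add: prod_zero_iff)
  qed
  have Bt0: "Bt \<noteq> 0" unfolding Bt_def using B0 C0 by simp
  obtain Bt' where Bt': "\<forall>z. poly Bt z = z ^ 0 * poly Bt' (z ^ N)"
    using decomp[OF N N, of Bt] coeff_res[OF N1, of Bt 0] invB unfolding w0_def by auto
  have AtB: "poly At z * poly B z = poly A z * poly Bt z" for z
    unfolding At_def Bt_def by simp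
  define bb where "bb = pcompose B [:0, w0:]"
  have pbb: "poly bb z = poly B (w0 * z)" for z unfolding bb_def by (simp add: poly_pcompose mult.commute)
  have bb0: "bb \<noteq> 0" unfolding bb_def using B0 w00 pcompose_eq_0[of B "[:0, w0:]"] by auto
  let ?S = "{0} \<union> {z. poly B z = 0} \<union> {z. poly bb z = 0}"
  have fin: "finite ?S" using B0 bb0 poly_roots_finite by auto
  have eqw: "poly At (w0 * w) = w0 ^ j * poly At w" if w: "w \<in> UNIV" "w \<notin> ?S" for w
  proof -
    have wn: "w \<noteq> 0" "poly B w \<noteq> 0" "poly B (w0 * w) \<noteq> 0" using w pbb by auto
    have c: "poly A (w0 * w) * poly B w = w0 ^ j * poly A w * poly B (w0 * w)"
      using cr[OF w0mu wn(1)] j(2) w0mu by simp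
    have "poly B (w0 * w) * poly B w * poly At (w0 * w) = poly A (w0 * w) * poly Bt (w0 * w) * poly B w"
      using AtB[of "w0 * w"] by (simp add: algebra_simps)
    also have "\<dots> = poly A (w0 * w) * poly B w * poly Bt w" using invB[of w] by simp
    also have "\<dots> = w0 ^ j * poly A w * poly B (w0 * w) * poly Bt w" using c by simp
    also have "\<dots> = poly B (w0 * w) * poly B w * (w0 ^ j * poly At w)"
      using AtB[of w] by (simp add: algebra_simps)
    finally show ?thesis using wn by simp
  qed
  have invA: "poly At (w0 * z) = w0 ^ j * poly At z" for z
    by (rule ext_finite[of UNIV ?S "\<lambda>w. poly At (w0 * w)" "\<lambda>w. w0 ^ j * poly At w", OF _ fin _ _ eqw])
      (auto intro!: continuous_intros)
  have cfA: "coeff At k \<noteq> 0 \<Longrightarrow> k mod N = j" for k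
    using coeff_res[OF N1, of At j k] invA j(1) unfolding w0_def by simp
  obtain At' where At': "\<forall>z. poly At z = z ^ j * poly At' (z ^ N)"
    using decomp[OF N j(1) cfA] by blast
  have Bt'0: "Bt' \<noteq> 0"
  proof
    assume "Bt' = 0"
    then have "poly Bt = poly 0" using Bt' by auto
    then show False using Bt0 by (simp add: poly_eq_poly_eq_iff)
  qed
  have id: "\<forall>z. z \<noteq> 0 \<longrightarrow> poly A z * poly Bt' (z ^ N) = z powi (int j) * poly At' (z ^ N) * poly B z"
  proof (intro allI impI)
    fix z :: complex assume "z \<noteq> 0"
    have "poly A z * poly Bt' (z ^ N) = poly A z * poly Bt z" using Bt' by simp
    also have "\<dots> = poly At z * poly B z" using AtB[of z] by simp
    also have "\<dots> = z powi (int j) * poly At' (z ^ N) * poly B z" using At' by (simp add: power_int_of_nat)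
    finally show "poly A z * poly Bt' (z ^ N) = z powi (int j) * poly At' (z ^ N) * poly B z" .
  qed
  obtain P Q where PQ: "coprime P Q" "Q \<noteq> 0"
    "\<forall>z. z \<noteq> 0 \<longrightarrow> poly A z * poly Q (z ^ N) = z powi (int j) * poly P (z ^ N) * poly B z"
    using gcd_reduce[OF N Bt'0 id] by blast
  moreover have "\<forall>\<zeta>\<in>mu N. \<sigma> \<zeta> = \<zeta> powi (int j)" using j(2) by (simp add: power_int_of_nat)
  ultimately show ?thesis by blast
qed

theorem mainTheorem10:
  shows
   "(\<forall>N::nat. N > 0 \<longrightarrow> (\<forall>A B \<sigma>. B \<noteq> 0 \<longrightarrow>
       (strict_endo (mu N) A B \<sigma> \<longleftrightarrow>
        (\<exists>m::int. \<exists>P Q :: complex poly. coprime P Q \<and> Q \<noteq> 0 \<and>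
            (\<forall>z. z \<noteq> 0 \<longrightarrow> poly A z * poly Q (z ^ N) = z powi m * poly P (z ^ N) * poly B z) \<and>
            (\<forall>\<zeta>\<in>mu N. \<sigma> \<zeta> = \<zeta> powi m)))))
    \<and> (\<forall>q::complex. q \<noteq> 0 \<and> norm q \<noteq> 1 \<longrightarrow> (\<forall>A B \<sigma>.
         strict_endo (range (\<lambda>k::int. q powi k)) A B \<sigma> \<and> A \<noteq> 0 \<longrightarrow> monomial_rat A B))
    \<and> (\<forall>G. mult_subgroup G \<and>
          ((\<exists>q\<in>G. norm q \<noteq> 1) \<or> (\<exists>g::nat \<Rightarrow> complex. (\<forall>n. g n \<in> G \<and> g n \<noteq> 1) \<and> g \<longlonglongrightarrow> 1)) \<longrightarrow>
         (\<forall>A B \<sigma>. strict_endo G A B \<sigma> \<and> A \<noteq> 0 \<longrightarrow> monomial_rat A B))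
    \<and> (\<forall>G. mult_subgroup G \<and> infinite G \<longrightarrow>
         (\<forall>A B \<sigma>. strict_endo G A B \<sigma> \<and> A \<noteq> 0 \<longrightarrow> monomial_rat A B))"
  proof (intro conjI)
  show "\<forall>N::nat. N > 0 \<longrightarrow> (\<forall>A B \<sigma>. B \<noteq> 0 \<longrightarrow>
       (strict_endo (mu N) A B \<sigma> \<longleftrightarrow>
        (\<exists>m::int. \<exists>P Q :: complex poly. coprime P Q \<and> Q \<noteq> 0 \<and>
            (\<forall>z. z \<noteq> 0 \<longrightarrow> poly A z * poly Q (z ^ N) = z powi m * poly P (z ^ N) * poly B z) \<and>
            (\<forall>\<zeta>\<in>mu N. \<sigma> \<zeta> = \<zeta> powi m))))"
  proof (intro allI impI iffI)
    fix N :: nat and A B :: "complex poly" and \<sigma> :: "complex \<Rightarrow> complex"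
    assume N: "N > 0" and B0: "B \<noteq> 0"
    {
      assume "strict_endo (mu N) A B \<sigma>"
      then show "\<exists>m::int. \<exists>P Q :: complex poly. coprime P Q \<and> Q \<noteq> 0 \<and>
            (\<forall>z. z \<noteq> 0 \<longrightarrow> poly A z * poly Q (z ^ N) = z powi m * poly P (z ^ N) * poly B z) \<and>
            (\<forall>\<zeta>\<in>mu N. \<sigma> \<zeta> = \<zeta> powi m)"
        using part_a_fwd[OF N] by blast
    next
      assume "\<exists>m::int. \<exists>P Q :: complex poly. coprime P Q \<and> Q \<noteq> 0 \<and>
            (\<forall>z. z \<noteq> 0 \<longrightarrow> poly A z * poly Q (z ^ N) = z powi m * poly P (z ^ N) * poly B z) \<and>
            (\<forall>\<zeta>\<in>mu N. \<sigma> \<zeta> = \<zeta> powi m)"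
      then obtain m P Q where h: "Q \<noteq> 0"
        "\<forall>z. z \<noteq> 0 \<longrightarrow> poly A z * poly Q (z ^ N) = z powi m * poly P (z ^ N) * poly B z"
        "\<forall>\<zeta>\<in>mu N. \<sigma> \<zeta> = \<zeta> powi m" by blast
      show "strict_endo (mu N) A B \<sigma>" by (rule part_a_rev[OF N B0 h])
    }
  qed
  show "\<forall>q::complex. q \<noteq> 0 \<and> norm q \<noteq> 1 \<longrightarrow> (\<forall>A B \<sigma>.
         strict_endo (range (\<lambda>k::int. q powi k)) A B \<sigma> \<and> A \<noteq> 0 \<longrightarrow> monomial_rat A B)"
  proof (intro allI impI; elim conjE)
    fix q :: complex and A B :: "complex poly" and \<sigma> :: "complex \<Rightarrow> complex"
    assume q0: "q \<noteq> 0" and q1: "norm q \<noteq> 1"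
      and se: "strict_endo (range (\<lambda>k::int. q powi k)) A B \<sigma>" and A0: "A \<noteq> 0"
    have G0: "0 \<notin> range (\<lambda>k::int. q powi k)" using q0 by auto
    have "q ^ n \<in> range (\<lambda>k::int. q powi k)" for n
      by (rule range_eqI[of _ _ "int n"]) (simp add: power_int_of_nat)
    then have "infinite (range (\<lambda>k::int. q powi k))" using infinite_powers[OF q0 q1] by blast
    then show "monomial_rat A B" using core[OF G0 _ se A0] by blast
  qed
  show "\<forall>G. mult_subgroup G \<and>
          ((\<exists>q\<in>G. norm q \<noteq> 1) \<or> (\<exists>g::nat \<Rightarrow> complex. (\<forall>n. g n \<in> G \<and> g n \<noteq> 1) \<and> g \<longlonglongrightarrow> 1)) \<longrightarrow>
         (\<forall>A B \<sigma>. strict_endo G A B \<sigma> \<and> A \<noteq> 0 \<longrightarrow> monomial_rat A B)"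
  proof (intro allI impI; elim conjE)
    fix G :: "complex set" and A B :: "complex poly" and \<sigma> :: "complex \<Rightarrow> complex"
    assume sg: "mult_subgroup G"
      and alt: "(\<exists>q\<in>G. norm q \<noteq> 1) \<or> (\<exists>g::nat \<Rightarrow> complex. (\<forall>n. g n \<in> G \<and> g n \<noteq> 1) \<and> g \<longlonglongrightarrow> 1)"
      and se: "strict_endo G A B \<sigma>" and A0: "A \<noteq> 0"
    have G0: "0 \<notin> G" and G1: "1 \<in> G" and Gm: "\<And>x y. x \<in> G \<Longrightarrow> y \<in> G \<Longrightarrow> x * y \<in> G"
      using sg unfolding mult_subgroup_def by blast+
    have "infinite G"
      using alt
    proof
      assume "\<exists>q\<in>G. norm q \<noteq> 1"
      then obtain q where q: "q \<in> G" "norm q \<noteq> 1" by blast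
      have q0: "q \<noteq> 0" using q G0 by auto
      have "q ^ n \<in> G" for n
        by (induction n) (use G1 Gm q in auto)
      then show "infinite G" using infinite_powers[OF q0 q(2)] by blast
    next
      assume "\<exists>g::nat \<Rightarrow> complex. (\<forall>n. g n \<in> G \<and> g n \<noteq> 1) \<and> g \<longlonglongrightarrow> 1"
      then obtain g :: "nat \<Rightarrow> complex" where "\<forall>n. g n \<in> G \<and> g n \<noteq> 1" "g \<longlonglongrightarrow> 1" by blast
      then show "infinite G" using infinite_seq by blast
    qed
    then show "monomial_rat A B" using core[OF G0 _ se A0] by blast
  qed
  show "\<forall>G. mult_subgroup G \<and> infinite G \<longrightarrow>
         (\<forall>A B \<sigma>. strict_endo G A B \<sigma> \<and> A \<noteq> 0 \<longrightarrow> monomial_rat A B)"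
  proof (intro allI impI; elim conjE)
    fix G :: "complex set" and A B :: "complex poly" and \<sigma> :: "complex \<Rightarrow> complex"
    assume sg: "mult_subgroup G" and inf: "infinite G" and se: "strict_endo G A B \<sigma>" and A0: "A \<noteq> 0"
    have G0: "0 \<notin> G" using sg unfolding mult_subgroup_def by blast
    show "monomial_rat A B" using core[OF G0 inf se A0] .
  qed
qed

end
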